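(* For all $n\ge0$, \[ c_n^2=\delta_{n,0}+c_{n-1}^2+c_{n-3}^2+2\sum_{l=3}^n p_{l-1}c_{n-l}^2 . \]
   Context: The Narayana's cows numbers $c_n$ are defined by $c_n=\delta_{n,0}+c_{n-1}+c_{n-3}$ for $n\ge0$, $c_n=0$ for $n<0$. The Padovan numbers $p_n$ are defined by $p_n=\delta_{n,0}+p_{n-2}+p_{n-3}$ for $n\ge0$, $p_n=0$ for $n<0$. $\delta_{i,j}$ is $1$ if $i=j$ and $0$ otherwise. Empty sums are $0$. *)

theory Defs
  imports Main
begin

function cows :: "int \<Rightarrow> int" where
  "cows n = (if n < 0 then 0
             else (if n = 0 then 1 else 0) + cows (n - 1) + cows (n - 3))"
  by auto
termination by (relation "measure (\<lambda>n. nat (n + 1))") auto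

function padovan :: "int \<Rightarrow> int" where
  "padovan n = (if n < 0 then 0
             else (if n = 0 then 1 else 0) + padovan (n - 2) + padovan (n - 3))"
  by auto
termination by (relation "measure (\<lambda>n. nat (n + 1))") auto

end

theory Submission
  imports Defs
begin

declare cows.simps [simp del] padovan.simps [simp del]

lemma cows_neg: "n < 0 \<Longrightarrow> cows n = 0"
  by (subst cows.simps) simp

lemma cows_0: "cows 0 = 1"
  by (subst cows.simps) (simp add: cows_neg)

lemma cows_rec: "n \<ge> 1 \<Longrightarrow> cows n = cows (n - 1) + cows (n - 3)"
  by (subst cows.simps) simp

lemma pad_rec: "n \<ge> 1 \<Longrightarrow> padovan n = padovan (n - 2) + padovan (n - 3)"
  by (subst padovan.simps) simp

lemma pad_neg: "n < 0 \<Longrightarrow> padovan n = 0"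
  by (subst padovan.simps) simp

lemma pad_0: "padovan 0 = 1"
  by (subst padovan.simps) (simp add: pad_neg)

lemma pad_2: "padovan 2 = 1"
  using pad_rec[of 2] pad_0 pad_neg[of "-1"] by simp
lemma pad_1: "padovan 1 = 0"
  using pad_rec[of 1] pad_neg[of "-1"] pad_neg[of "-2"] by simp
lemma pad_3: "padovan 3 = 1"
  using pad_rec[of 3] pad_0 pad_1 by simp
lemma pad_4: "padovan 4 = 1"
  using pad_rec[of 4] pad_2 pad_1 by simp

definition S :: "int \<Rightarrow> int" where
  "S m = (\<Sum>k\<in>{0..m}. padovan (k + 2) * (cows (m - k))^2)"

lemma S_neg: "m < 0 \<Longrightarrow> S m = 0"
  unfolding S_def by simp

lemma shift: "(\<Sum>k\<in>{a..b}. f k) = (\<Sum>k\<in>{a+d..b+d}. f (k - d))" for f :: "int \<Rightarrow> int"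
  by (rule sum.reindex_bij_witness[of _ "\<lambda>k. k - d" "\<lambda>k. k + d"]) auto

lemma S_rec: "m \<ge> 2 \<Longrightarrow> S m = S (m - 2) + S (m - 3) + (cows m)^2 + (cows (m - 1))^2"
proof -
  assume m: "m \<ge> 2"
  let ?f = "\<lambda>k. padovan (k + 2) * (cows (m - k))^2"
  have u: "{0..m} = {0..2} \<union> {3..m}" using m by auto
  have "S m = sum ?f {0..2} + sum ?f {3..m}"
    unfolding S_def u by (rule sum.union_disjoint) auto
  moreover have "{0..2::int} = {0,1,2}" by auto
  hence "sum ?f {0..2} = (cows m)^2 + (cows (m - 1))^2 + (cows (m - 2))^2"
    by (simp add: pad_2 pad_3 pad_4)
  moreover have "sum ?f {3..m} = (\<Sum>k\<in>{3..m}. padovan k * (cows (m - k))^2)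
       + (\<Sum>k\<in>{3..m}. padovan (k - 1) * (cows (m - k))^2)"
    by (subst sum.distrib[symmetric], rule sum.cong) (auto simp: pad_rec[of "_ + 2"] algebra_simps)
  moreover have "(\<Sum>k\<in>{3..m}. padovan (k - 1) * (cows (m - k))^2) = S (m - 3)"
    unfolding S_def
    using shift[of "\<lambda>k. padovan (k + 2) * (cows (m - 3 - k))^2" 0 "m-3" 3] by (simp add: algebra_simps)
  moreover have "(\<Sum>k\<in>{3..m}. padovan k * (cows (m - k))^2) = S (m - 2) - (cows (m - 2))^2"
  proof -
    have "{0..m-2} = insert 0 {1..m-2}" using m by auto
    hence "S (m - 2) = (cows (m - 2))^2 + (\<Sum>k\<in>{1..m-2}. padovan (k + 2) * (cows (m - 2 - k))^2)"
      unfolding S_def by (simp add: pad_2)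
    moreover have "(\<Sum>k\<in>{1..m-2}. padovan (k + 2) * (cows (m - 2 - k))^2)
        = (\<Sum>k\<in>{3..m}. padovan k * (cows (m - k))^2)"
      using shift[of "\<lambda>k. padovan (k + 2) * (cows (m - 2 - k))^2" 1 "m-2" 2] by (simp add: algebra_simps)
    ultimately show ?thesis by simp
  qed
  ultimately show ?thesis by simp
qed

lemma S_0: "S 0 = 1"
  unfolding S_def by (simp add: pad_2 cows_0)

lemma S_1: "S 1 = 2"
proof -
  have "{0..1::int} = {0,1}" by auto
  moreover have "cows 1 = 1" using cows_rec[of 1] cows_0 cows_neg[of "-2"] by simp
  ultimately show ?thesis unfolding S_def by (simp add: pad_2 pad_3 cows_0)
qed

lemma main: "cows (m + 2) * cows m = S m"
proof (induction "nat m" arbitrary: m rule: less_induct)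
  case less
  show ?case
  proof (cases "m < 0")
    case True then show ?thesis by (simp add: cows_neg S_neg)
  next
    case False
    have a: "cows (m + 2) = cows m + cows (m - 2) + cows (m - 1)"
      using cows_rec[of "m+2"] cows_rec[of "m+1"] False by (simp add: add.commute)
    have b: "cows m * cows (m - 1) = (cows (m - 1))^2 + cows (m - 1) * cows (m - 3)"
    proof (cases "m = 0")
      case True then show ?thesis by (simp add: cows_neg)
    next
      case f: False
      then show ?thesis using cows_rec[of m] False by (simp add: power2_eq_square algebra_simps)
    qed
    have i2: "cows m * cows (m - 2) = S (m - 2)"
      using less[of "m - 2"] False by (cases "m < 2") (auto simp: cows_neg S_neg mult.commute)
    have i3: "cows (m - 1) * cows (m - 3) = S (m - 3)"
      using less[of "m - 3"] False by (cases "m < 3") (auto simp: cows_neg S_neg mult.commute)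
    have "cows (m + 2) * cows m = (cows m)^2 + (cows (m-1))^2 + S (m - 2) + S (m - 3)"
      using a b i2 i3 by (simp add: power2_eq_square algebra_simps)
    moreover have "S m = (cows m)^2 + (cows (m-1))^2 + S (m - 2) + S (m - 3)"
    proof -
      consider "m = 0" | "m = 1" | "m \<ge> 2" using False by linarith
      then show ?thesis
      proof cases
        case 1 then show ?thesis by (simp add: S_0 S_neg cows_0 cows_neg)
      next
        case 2 then show ?thesis
          using S_1 cows_rec[of 1] cows_0 cows_neg[of "-2"] by (simp add: S_neg)
      next
        case 3 then show ?thesis using S_rec by simp
      qed
    qed
    ultimately show ?thesis by simp
  qed
qed

theorem mainTheorem12:
  fixes n :: int
  assumes "n \<ge> 0"
  shows "(cows n)^2 = (if n = 0 then 1 else 0) + (cows (n - 1))^2 + (cows (n - 3))^2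
           + 2 * (\<Sum>l\<in>{3..n}. padovan (l - 1) * (cows (n - l))^2)"
proof (cases "n = 0")
  case True then show ?thesis by (simp add: cows_0 cows_neg)
next
  case False
  have "(\<Sum>l\<in>{3..n}. padovan (l - 1) * (cows (n - l))^2)
      = (\<Sum>k\<in>{0..n-3}. padovan (k + 2) * (cows (n - 3 - k))^2)"
    using shift[of "\<lambda>k. padovan (k + 2) * (cows (n - 3 - k))^2" 0 "n-3" 3] by simp
  also have "\<dots> = cows (n - 1) * cows (n - 3)"
    using main[of "n-3"] unfolding S_def by (simp add: algebra_simps)
  finally have s: "(\<Sum>l\<in>{3..n}. padovan (l - 1) * (cows (n - l))^2) = cows (n - 1) * cows (n - 3)" .
  show ?thesis using False assms cows_rec[of n] s by (simp add: power2_eq_square algebra_simps)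
qed

end
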